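(* Assume the CFL condition $0\le \lambda \sup_{w\ge 1} W'(w)\le 1$, and let $(y_{0,i})_{i\in\mathbb Z}$ be a bounded sequence with $y_{0,i}\ge1$ and $|y_{0}|_{BV}:=\sum_{i\in\mathbb Z}|y_{0,i+1}-y_{0,i}|<\infty$. Let $(w^n_i)$ be the solution of the scheme. Then for all $n\ge0$ and $i\in\mathbb Z$: $$1\le \inf_j y_{0,j}\le w^n_i\le \sup_j y_{0,j},\qquad \sum_{i}|w^n_{i+1}-w^n_i|\le \sum_i|y_{0,i+1}-y_{0,i}|,$$ $$\Delta z\sum_i|w^{n+1}_i-w^n_i|\le \Delta t\,\|W'\|_{\infty}\,|y_0|_{BV},$$ where $\|W'\|_\infty=\sup_{w\ge1}|W'(w)|$.
   Context: Kernel: $\Phi:[0,\infty)\to[0,\infty)$ is non-increasing with $\int_0^\infty\Phi(z)\,dz=1$ and $\int_0^\infty z\Phi(z)\,dz<\infty$; for $\alpha>0$, $\Phi_\alpha(z)=\alpha^{-1}\Phi(z/\alpha)$. Flux: $V\in C^1([0,\infty))$ is non-increasing and $W:[1,\infty)\to\mathbb R$, $W(w)=V(1/w)$. Discretization: $\Delta z>0$, $\Delta t>0$, $\lambda=\Delta t/\Delta z$, $z_j=(j-\tfrac12)\Delta z$ for $j\in\tfrac12\mathbb Z$, and for integers $j\ge i$, $\Phi_{ij\alpha}=\int_{z_{j-1/2}}^{z_{j+1/2}}\Phi_\alpha(\zeta-z_{i-1/2})\,d\zeta$. The scheme: $w^0_i=\sum_{j\ge i}\Phi_{ij\alpha}y_{0,j}$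 and $w^{n+1}_i=w^n_i+\lambda(\overline W^{\,n}_{i+1/2}-\overline W^{\,n}_{i-1/2})$ for $n\ge0$, where $\overline W^{\,n}_{i-1/2}=\sum_{j\ge i}\Phi_{ij\alpha}W(w^n_j)$. *)

theory Defs
  imports "HOL-Analysis.Analysis"
begin

definition Phi_alpha :: "(real \<Rightarrow> real) \<Rightarrow> real \<Rightarrow> real \<Rightarrow> real" where
  "Phi_alpha Phi \<alpha> z = Phi (z / \<alpha>) / \<alpha>"

text \<open>Grid points z_j = (j - 1/2) dz, for j a half-integer (given as a real).\<close>
definition zpt :: "real \<Rightarrow> real \<Rightarrow> real" where
  "zpt dz j = (j - 1/2) * dz"

definition Phi_coef :: "(real \<Rightarrow> real) \<Rightarrow> real \<Rightarrow> real \<Rightarrow> int \<Rightarrow> int \<Rightarrow> real" where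
  "Phi_coef Phi \<alpha> dz i j =
     integral {zpt dz (real_of_int j - 1/2) .. zpt dz (real_of_int j + 1/2)}
       (\<lambda>\<zeta>. Phi_alpha Phi \<alpha> (\<zeta> - zpt dz (real_of_int i - 1/2)))"

text \<open>Flux W(w) = V(1/w) (meaningful for w >= 1).\<close>
definition Wf :: "(real \<Rightarrow> real) \<Rightarrow> real \<Rightarrow> real" where
  "Wf V w = V (1 / w)"

text \<open>Nonlocal flux at the interface i - 1/2: sum over j >= i of Phi_{ij alpha} W(w_j).\<close>
definition Wbar :: "(real \<Rightarrow> real) \<Rightarrow> real \<Rightarrow> real \<Rightarrow> (real \<Rightarrow> real) \<Rightarrow> (int \<Rightarrow> real) \<Rightarrow> int \<Rightarrow> real" where
  "Wbar Phi \<alpha> dz V w i = (\<Sum>\<^sub>\<infinity> j\<in>{i..}. Phi_coef Phi \<alpha> dz i j * Wf V (w j))"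

primrec scheme :: "(real \<Rightarrow> real) \<Rightarrow> real \<Rightarrow> real \<Rightarrow> real \<Rightarrow> (real \<Rightarrow> real) \<Rightarrow> (int \<Rightarrow> real)
                    \<Rightarrow> nat \<Rightarrow> int \<Rightarrow> real" where
  "scheme Phi \<alpha> dz dt V y0 0 i = (\<Sum>\<^sub>\<infinity> j\<in>{i..}. Phi_coef Phi \<alpha> dz i j * y0 j)"
| "scheme Phi \<alpha> dz dt V y0 (Suc n) i =
     scheme Phi \<alpha> dz dt V y0 n i
     + (dt / dz) * (Wbar Phi \<alpha> dz V (scheme Phi \<alpha> dz dt V y0 n) (i + 1)
                    - Wbar Phi \<alpha> dz V (scheme Phi \<alpha> dz dt V y0 n) i)"

end

theory Submission
  imports Defs
begin


lemma has_integral_shift_real: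
  fixes g :: "real \<Rightarrow> real"
  assumes "g integrable_on {a..b}"
  shows "((\<lambda>x. g (x - t)) has_integral integral {a..b} g) {a+t..b+t}"
proof -
  have "(g has_integral integral {a..b} g) (cbox a b)"
    using assms by (simp add: has_integral_integral)
  from has_integral_affinity[OF this, of 1 "-t"]
  have "((\<lambda>x. g (x - t)) has_integral integral {a..b} g) ((\<lambda>x. x + t) ` {a..b})"
    by simp
  moreover have "(\<lambda>x. x + t) ` {a..b} = {a+t..b+t}"
    by (auto simp: image_iff intro!: bexI[where x="_ - t"])
  ultimately show ?thesis by simp
qed

lemma Pa_has_integral:
  fixes Phi :: "real \<Rightarrow> real"
  assumes Phi_int: "(Phi has_integral 1) {0..}" and alpha_pos: "\<alpha> > 0" and b: "0 \<le> b"
  shows "(Phi_alpha Phi \<alpha> has_integral integral {0..b/\<alpha>} Phi) {0..b}"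
proof -
  have "Phi integrable_on {0..b/\<alpha>}"
    using Phi_int by (intro integrable_on_subinterval[of _ "{0..}"]) auto
  hence "(Phi has_integral integral {0..b/\<alpha>} Phi) (cbox 0 (b/\<alpha>))"
    by (simp add: has_integral_integral)
  from has_integral_affinity[OF this, of "1/\<alpha>" 0] alpha_pos
  have "((\<lambda>x. Phi (x/\<alpha>)) has_integral \<alpha> * integral {0..b/\<alpha>} Phi) ((\<lambda>x. \<alpha> * x) ` {0..b/\<alpha>})"
    by simp
  moreover have "(\<lambda>x. \<alpha> * x) ` {0..b/\<alpha>} = {0..b}"
    using alpha_pos by (auto simp: image_iff field_simps intro!: bexI[where x="_ / \<alpha>"])
  ultimately have "((\<lambda>x. Phi (x/\<alpha>)) has_integral \<alpha> * integral {0..b/\<alpha>} Phi) {0..b}" by simp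
  from has_integral_mult_left[OF this, of "1/\<alpha>"] alpha_pos show ?thesis
    unfolding Phi_alpha_def by (simp add: field_simps)
qed

lemma Pa_integrable:
  fixes Phi :: "real \<Rightarrow> real"
  assumes Phi_int: "(Phi has_integral 1) {0..}" and alpha_pos: "\<alpha> > 0" and "0 \<le> x"
  shows "Phi_alpha Phi \<alpha> integrable_on {x..y}"
proof (cases "x \<le> y")
  case True
  have "Phi_alpha Phi \<alpha> integrable_on {0..y}"
    using Pa_has_integral[OF Phi_int alpha_pos, of y] True assms(3) by (auto intro: has_integral_integrable)
  then show ?thesis by (rule integrable_on_subinterval) (use assms in auto)
next
  case False then show ?thesis by (simp add: integrable_on_empty)
qed

definition ck :: "(real \<Rightarrow> real) \<Rightarrow> real \<Rightarrow> real \<Rightarrow> nat \<Rightarrow> real" where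
  "ck Phi \<alpha> dz k = integral {real k * dz .. real (Suc k) * dz} (Phi_alpha Phi \<alpha>)"

locale kern =
  fixes Phi :: "real \<Rightarrow> real" and \<alpha> dz :: real
  assumes Phi_nonneg: "\<forall>z\<ge>0. Phi z \<ge> 0"
    and Phi_noninc: "\<forall>x y. 0 \<le> x \<longrightarrow> x \<le> y \<longrightarrow> Phi y \<le> Phi x"
    and Phi_int: "(Phi has_integral 1) {0..}"
    and alpha_pos: "\<alpha> > 0"
    and dz_pos: "dz > 0"
begin

abbreviation "Pa \<equiv> Phi_alpha Phi \<alpha>"
abbreviation "c \<equiv> ck Phi \<alpha> dz"

lemma Pa_int: "0 \<le> x \<Longrightarrow> Pa integrable_on {x..y}"
  using Pa_integrable[OF Phi_int alpha_pos] by blast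

lemma Pa_nonneg: "0 \<le> x \<Longrightarrow> 0 \<le> Pa x"
  using Phi_nonneg alpha_pos unfolding Phi_alpha_def by auto

lemma Pa_mono: "0 \<le> x \<Longrightarrow> x \<le> y \<Longrightarrow> Pa y \<le> Pa x"
  using Phi_noninc alpha_pos unfolding Phi_alpha_def
  by (auto intro!: divide_right_mono divide_right_mono simp: divide_right_mono)

lemma coef_eq: "Phi_coef Phi \<alpha> dz i (i + int k) = c k"
proof -
  have "((\<lambda>x. Pa (x - (real_of_int i - 1) * dz)) has_integral c k)
     {real k * dz + (real_of_int i - 1) * dz .. real (Suc k) * dz + (real_of_int i - 1) * dz}"
    unfolding ck_def by (rule has_integral_shift_real, rule Pa_int) (use dz_pos in simp)
  moreover have "real k * dz + (real_of_int i - 1) * dz = zpt dz (real_of_int (i + int k) - 1/2)"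
    "real (Suc k) * dz + (real_of_int i - 1) * dz = zpt dz (real_of_int (i + int k) + 1/2)"
    "zpt dz (real_of_int i - 1/2) = (real_of_int i - 1) * dz"
    unfolding zpt_def by (auto simp: algebra_simps)
  ultimately show ?thesis unfolding Phi_coef_def by (simp add: integral_unique)
qed

lemma c_nonneg: "0 \<le> c k"
proof -
  have "0 \<le> real k * dz" using dz_pos by simp
  then show ?thesis unfolding ck_def
    by (intro integral_nonneg Pa_int Pa_nonneg) auto
qed

lemma c_mono: "c (Suc k) \<le> c k"
proof -
  have "((\<lambda>x. Pa (x - - dz)) has_integral c (Suc k))
     {real (Suc k) * dz + - dz .. real (Suc (Suc k)) * dz + - dz}"
    unfolding ck_def by (rule has_integral_shift_real, rule Pa_int) (use dz_pos in simp)
  hence "((\<lambda>x. Pa (x + dz)) has_integral c (Suc k)) {real k * dz .. real (Suc k) * dz}"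
    by (simp add: algebra_simps)
  moreover have "(Pa has_integral c k) {real k * dz .. real (Suc k) * dz}"
    unfolding ck_def by (rule integrable_integral, rule Pa_int) (use dz_pos in simp)
  ultimately show ?thesis
  proof (rule has_integral_le)
    fix x assume "x \<in> {real k * dz .. real (Suc k) * dz}"
    moreover have "0 \<le> real k * dz" using dz_pos by simp
    ultimately have "0 \<le> x" by simp
    then show "Pa (x + dz) \<le> Pa x" using dz_pos by (intro Pa_mono) auto
  qed
qed

lemma c_partial: "(\<Sum>k<N. c k) = integral {0..real N * dz} Pa"
proof (induction N)
  case 0 then show ?case by simp
next
  case (Suc N)
  have "integral {0..real N * dz} Pa + integral {real N * dz..real (Suc N) * dz} Pa
        = integral {0..real (Suc N) * dz} Pa"
    by (rule Henstock_Kurzweil_Integration.integral_combine) (use dz_pos in \<open>auto intro: Pa_int\<close>)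
  then show ?case using Suc by (simp add: ck_def)
qed

lemma c_partial_lim: "(\<lambda>N. \<Sum>k<N. c k) \<longlonglongrightarrow> 1"
proof -
  define f where "f n x = (if x \<in> {..real n * dz / \<alpha>} then Phi x else 0)" for n x
  have int_eq: "integral {0..} (f n) = integral {0..real n * dz / \<alpha>} Phi" for n
  proof -
    have "integral {0..} (f n) = integral ({..real n * dz / \<alpha>} \<inter> {0..}) Phi"
      unfolding f_def by (rule integral_restrict_Int)
    also have "{..real n * dz / \<alpha>} \<inter> {0..} = {0..real n * dz / \<alpha>}" by auto
    finally show ?thesis .
  qed
  have fint: "f n integrable_on {0..}" for n
  proof -
    have "{..real n * dz / \<alpha>} \<inter> {0..} = {0..real n * dz / \<alpha>}" by auto
    moreover have "Phi integrable_on {0..real n * dz / \<alpha>}"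
      using Phi_int by (intro integrable_on_subinterval[of _ "{0..}"]) auto
    ultimately have "Phi integrable_on ({..real n * dz / \<alpha>} \<inter> {0..})" by simp
    then show ?thesis unfolding f_def by (subst integrable_restrict_Int)
  qed
  have mc: "Phi integrable_on {0..} \<and> ((\<lambda>k. integral {0..} (f k)) \<longlonglongrightarrow> integral {0..} Phi)"
  proof (rule monotone_convergence_increasing)
    show "f k integrable_on {0..}" for k by (rule fint)
    show "f k x \<le> f (Suc k) x" if "x \<in> {0..}" for k x
    proof -
      have "real k * dz / \<alpha> \<le> real (Suc k) * dz / \<alpha>"
        using dz_pos alpha_pos by (intro divide_right_mono mult_right_mono) auto
      then show ?thesis using that Phi_nonneg unfolding f_def by auto
    qed
    show "(\<lambda>k. f k x) \<longlonglongrightarrow> Phi x" if "x \<in> {0..}" for x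
    proof -
      obtain n :: nat where n: "x * \<alpha> / dz < real n" using reals_Archimedean2 by blast
      have "\<forall>k\<ge>n. f k x = Phi x"
      proof (intro allI impI)
        fix k assume "n \<le> k"
        hence "x * \<alpha> / dz < real k" using n by (meson less_le_trans of_nat_le_iff)
        hence "x \<le> real k * dz / \<alpha>" using dz_pos alpha_pos by (simp add: field_simps)
        then show "f k x = Phi x" unfolding f_def by simp
      qed
      then show ?thesis by (intro tendsto_eventually) (auto simp: eventually_sequentially)
    qed
    show "bounded (range (\<lambda>k. integral {0..} (f k)))"
    proof -
      have "\<bar>integral {0..} (f k)\<bar> \<le> 1" for k
      proof -
        have "integral {0..} (f k) \<le> integral {0..} Phi"
          by (rule integral_le) (use fint Phi_int Phi_nonneg in \<open>auto simp: f_def\<close>)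
        moreover have "0 \<le> integral {0..} (f k)"
          by (rule integral_nonneg) (use fint Phi_nonneg in \<open>auto simp: f_def\<close>)
        ultimately show ?thesis using Phi_int by (simp add: integral_unique)
      qed
      then show ?thesis unfolding bounded_iff by auto
    qed
  qed
  have "(\<Sum>k<N. c k) = integral {0..} (f N)" for N
  proof -
    have "(\<Sum>k<N. c k) = integral {0..real N * dz} Pa" by (rule c_partial)
    also have "\<dots> = integral {0..real N * dz / \<alpha>} Phi"
      using Pa_has_integral[OF Phi_int alpha_pos, of "real N * dz"] dz_pos
      by (simp add: integral_unique)
    finally show ?thesis using int_eq by simp
  qed
  then show ?thesis using mc Phi_int by (simp add: integral_unique)
qed

lemma c_has_sum: "(c has_sum 1) UNIV"
  by (rule sums_nonneg_imp_has_sum) (use c_partial_lim c_nonneg in \<open>auto simp: sums_def\<close>)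

end



lemma summable_dom:
  fixes f g :: "'a \<Rightarrow> real"
  assumes "f summable_on A" "\<And>x. x \<in> A \<Longrightarrow> \<bar>g x\<bar> \<le> f x"
  shows "g summable_on A"
proof -
  have "(\<lambda>x. norm (g x)) summable_on A"
    by (rule Infinite_Sum.abs_summable_on_comparison_test'[OF assms(1)]) (use assms(2) in auto)
  then show ?thesis by (rule summable_on_iff_abs_summable_on_real[THEN iffD2])
qed

lemma infsum_abs_le:
  fixes f g :: "'a \<Rightarrow> real"
  assumes "f summable_on A" "\<And>x. x \<in> A \<Longrightarrow> \<bar>g x\<bar> \<le> f x"
  shows "\<bar>infsum g A\<bar> \<le> infsum f A"
proof -
  have n: "(\<lambda>x. norm (g x)) summable_on A"
    by (rule Infinite_Sum.abs_summable_on_comparison_test'[OF assms(1)]) (use assms(2) in auto)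
  have "norm (infsum g A) \<le> infsum (\<lambda>x. norm (g x)) A"
    by (rule norm_infsum_bound) (use n in auto)
  also have "\<dots> \<le> infsum f A"
    by (rule infsum_mono[OF n assms(1)]) (use assms(2) in auto)
  finally show ?thesis by simp
qed

lemma convA:
  fixes a :: "nat \<Rightarrow> real" and g :: "int \<Rightarrow> real"
  assumes a0: "\<And>k. 0 \<le> a k" and as: "(a has_sum S) UNIV"
    and g0: "\<And>j. 0 \<le> g j" and gs: "(g has_sum T) UNIV"
  shows "((\<lambda>i. \<Sum>\<^sub>\<infinity>k. a k * g (i + s + int k)) has_sum S * T) UNIV"
proof -
  define F where "F = (\<lambda>(k::nat, j::int). a k * g j)"
  have h1: "((\<lambda>j. F (k, j)) has_sum a k * T) UNIV" for k
    unfolding F_def using has_sum_cmult_right[OF gs, of "a k"] by simp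
  have h2: "((\<lambda>k. a k * T) has_sum S * T) UNIV"
    using has_sum_cmult_left[OF as, of T] by simp
  have h3: "F summable_on Sigma UNIV (\<lambda>_. UNIV)"
  proof (rule summable_on_SigmaI[OF h1])
    show "(\<lambda>k. a k * T) summable_on UNIV" using h2 by (rule has_sum_imp_summable)
    show "0 \<le> F (x, y)" for x y using a0 g0 by (simp add: F_def)
  qed
  have h4: "(F has_sum S*T) (Sigma UNIV (\<lambda>_. UNIV))"
    by (rule has_sum_SigmaI[OF h1 h2 h3])
  define G where "G = (\<lambda>(i::int, k::nat). a k * g (i + s + int k))"
  have h5: "(G has_sum S*T) (UNIV \<times> UNIV)"
  proof -
    have "(G has_sum S*T) (UNIV\<times>UNIV) = (F has_sum S*T) (UNIV \<times> UNIV)"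
      by (rule has_sum_reindex_bij_witness[where j="\<lambda>(i,k). (k, i + s + int k)"
            and i="\<lambda>(k,j). (j - s - int k, k)"]) (simp_all add: F_def G_def split: prod.splits)
    with h4 show ?thesis by simp
  qed
  have gT: "g j \<le> T" for j
  proof -
    have "(g has_sum g j) {j}" using has_sum_finite[of "{j}" g] by simp
    then show ?thesis by (rule has_sum_mono'[OF _ gs]) (simp_all add: g0)
  qed
  have h6: "((\<lambda>k. G (i,k)) has_sum (\<Sum>\<^sub>\<infinity>k. a k * g (i + s + int k))) UNIV" for i
  proof -
    have "(\<lambda>k. a k * g (i + s + int k)) summable_on UNIV"
      by (rule summable_dom[OF has_sum_imp_summable[OF h2]])
         (simp add: abs_mult a0 g0 mult_left_mono gT)
    then show ?thesis unfolding G_def by (simp add: has_sum_infsum)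
  qed
  show ?thesis using has_sum_Sigma'[OF h5 h6] by simp
qed


lemma has_sum_diff':
  fixes f g :: "'a \<Rightarrow> real"
  assumes "(f has_sum a) A" "(g has_sum b) A"
  shows "((\<lambda>x. f x - g x) has_sum (a - b)) A"
proof -
  have "((\<lambda>x. - g x) has_sum (- b)) A" using assms(2) by (simp add: has_sum_uminus)
  from has_sum_add[OF assms(1) this] show ?thesis by simp
qed

lemma key_abs:
  fixes D g t L :: real
  assumes t0: "0 \<le> t" and tL: "t*L \<le> 1" and L0: "0 \<le> L"
    and pos: "0 \<le> D \<Longrightarrow> 0 \<le> g \<and> g \<le> L*D"
    and neg: "D \<le> 0 \<Longrightarrow> L*D \<le> g \<and> g \<le> 0"
  shows "\<bar>D - t*g\<bar> = \<bar>D\<bar> - t*\<bar>g\<bar>"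
proof (cases "0 \<le> D")
  case True
  then have g: "0 \<le> g" "g \<le> L*D" using pos by auto
  have "t*g \<le> t*(L*D)" using g t0 by (intro mult_left_mono) auto
  also have "\<dots> = (t*L)*D" by simp
  also have "\<dots> \<le> D" using True tL t0 L0 by (simp add: mult_left_le_one_le)
  finally show ?thesis using True g t0 by simp
next
  case False
  then have g: "L*D \<le> g" "g \<le> 0" using neg by auto
  have "t*(L*D) \<le> t*g" using g t0 by (intro mult_left_mono) auto
  moreover have "(t*L)*(-D) \<le> -D" using False tL t0 L0 by (simp add: mult_left_le_one_le)
  ultimately have "D \<le> t*g" by (simp add: algebra_simps)
  then show ?thesis using False g t0 by (simp add: abs_if algebra_simps)
qed

locale absch =
  fixes c :: "nat \<Rightarrow> real" and W :: "real \<Rightarrow> real" and lam L L' m M :: real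
  assumes c_nonneg: "\<And>k. 0 \<le> c k" and c_mono: "\<And>k. c (Suc k) \<le> c k"
    and c_sum: "(c has_sum 1) UNIV"
    and W_mono: "\<And>a b. 1 \<le> a \<Longrightarrow> a \<le> b \<Longrightarrow> W a \<le> W b"
    and W_lip: "\<And>a b. 1 \<le> a \<Longrightarrow> a \<le> b \<Longrightarrow> W b - W a \<le> L * (b - a)"
    and W_lip': "\<And>a b. 1 \<le> a \<Longrightarrow> a \<le> b \<Longrightarrow> W b - W a \<le> L' * (b - a)"
    and lam_nonneg: "0 \<le> lam" and L_nonneg: "0 \<le> L" and L'_nonneg: "0 \<le> L'"
    and CFL: "lam * L \<le> 1"
    and m_ge: "1 \<le> m"
begin

definition conv :: "(int \<Rightarrow> real) \<Rightarrow> int \<Rightarrow> real" where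
  "conv u i = (\<Sum>\<^sub>\<infinity>k. c k * u (i + int k))"

definition step :: "(int \<Rightarrow> real) \<Rightarrow> int \<Rightarrow> real" where
  "step w i = w i + lam * (conv (\<lambda>j. W (w j)) (i+1) - conv (\<lambda>j. W (w j)) i)"

definition a :: "nat \<Rightarrow> real" where "a k = c k - c (Suc k)"

lemma c_summ: "c summable_on UNIV"
  using c_sum by (rule has_sum_imp_summable)

lemma c_le1: "c k \<le> 1"
proof -
  have "(c has_sum c k) {k}" using has_sum_finite[of "{k}" c] by simp
  then show ?thesis by (rule has_sum_mono'[OF _ c_sum]) (simp_all add: c_nonneg)
qed

lemma c_lim: "c \<longlonglongrightarrow> 0"
  by (rule summable_LIMSEQ_zero[OF summable_on_imp_summable[OF c_summ]])

lemma a_nonneg: "0 \<le> a k"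
  using c_mono[of k] by (simp add: a_def)

lemma a_sum: "(a has_sum c 0) UNIV"
proof -
  have "a sums (c 0 - 0)" unfolding a_def by (rule telescope_sums'[OF c_lim])
  then show ?thesis by (intro sums_nonneg_imp_has_sum) (simp_all add: a_nonneg)
qed

lemma csum_const: "((\<lambda>k. c k * B) has_sum B) UNIV"
  using has_sum_cmult_left[OF c_sum, of B] by simp

lemma asum_const: "((\<lambda>k. a k * B) has_sum c 0 * B) UNIV"
  using has_sum_cmult_left[OF a_sum, of B] by simp

lemma c_summ_bdd:
  assumes "\<And>k. \<bar>f k\<bar> \<le> B"
  shows "(\<lambda>k. c k * f k) summable_on UNIV"
  by (rule summable_dom[OF has_sum_imp_summable[OF csum_const[of B]]])
     (simp add: abs_mult c_nonneg mult_left_mono assms)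

lemma a_summ_bdd:
  assumes "\<And>k. \<bar>f k\<bar> \<le> B"
  shows "(\<lambda>k. a k * f k) summable_on UNIV"
  by (rule summable_dom[OF has_sum_imp_summable[OF asum_const[of B]]])
     (simp add: abs_mult a_nonneg mult_left_mono assms)

lemma c0_nonneg: "0 \<le> c 0" by (rule c_nonneg)
lemma c0_le1: "c 0 \<le> 1" by (rule c_le1)

lemma conv_bounds:
  assumes lo: "\<And>j. lo \<le> u j" and hi: "\<And>j. u j \<le> hi"
  shows "lo \<le> conv u i" "conv u i \<le> hi"
proof -
  have b: "\<bar>u j\<bar> \<le> \<bar>lo\<bar> + \<bar>hi\<bar>" for j using lo[of j] hi[of j] by auto
  have s: "(\<lambda>k. c k * u (i + int k)) summable_on UNIV" by (rule c_summ_bdd) (rule b)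
  have "(\<Sum>\<^sub>\<infinity>k. c k * lo) \<le> conv u i" unfolding conv_def
    by (rule infsum_mono[OF has_sum_imp_summable[OF csum_const] s])
       (simp add: c_nonneg lo mult_left_mono)
  then show "lo \<le> conv u i" using infsumI[OF csum_const[of lo]] by simp
  have "conv u i \<le> (\<Sum>\<^sub>\<infinity>k. c k * hi)" unfolding conv_def
    by (rule infsum_mono[OF s has_sum_imp_summable[OF csum_const]])
       (simp add: c_nonneg hi mult_left_mono)
  then show "conv u i \<le> hi" using infsumI[OF csum_const[of hi]] by simp
qed

lemma conv_diff:
  assumes b: "\<And>j. \<bar>u j\<bar> \<le> B"
  shows "conv u (i+1) - conv u i = (\<Sum>\<^sub>\<infinity>k. c k * (u (i + int k + 1) - u (i + int k)))"
proof -
  have s1: "(\<lambda>k. c k * u (i + 1 + int k)) summable_on UNIV" by (rule c_summ_bdd) (rule b)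
  have s2: "(\<lambda>k. c k * u (i + int k)) summable_on UNIV" by (rule c_summ_bdd) (rule b)
  have "((\<lambda>k. c k * u (i + 1 + int k) - c k * u (i + int k)) has_sum (conv u (i+1) - conv u i)) UNIV"
    unfolding conv_def by (rule has_sum_diff') (use s1 s2 in auto)
  then show ?thesis
    by (intro infsumI[symmetric]) (simp add: algebra_simps)
qed

lemma abel:
  assumes b: "\<And>k. \<bar>E k\<bar> \<le> B"
  shows "(\<Sum>\<^sub>\<infinity>k. c k * (E (Suc k) - E k)) = (\<Sum>\<^sub>\<infinity>k. a k * E (Suc k)) - c 0 * E 0"
proof -
  have b2: "\<bar>E (Suc k) - E k\<bar> \<le> 2*B" for k using b[of k] b[of "Suc k"] by auto
  have s1: "(\<lambda>k. c k * (E (Suc k) - E k)) summable_on UNIV" by (rule c_summ_bdd) (rule b2)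
  have s2: "(\<lambda>k. a k * E (Suc k)) summable_on UNIV" by (rule a_summ_bdd) (rule b)
  have fin: "(\<Sum>k<N. c k * (E (Suc k) - E k)) = (\<Sum>k<N. a k * E (Suc k)) + c N * E N - c 0 * E 0" for N
    by (induction N) (simp_all add: a_def algebra_simps)
  have l1: "(\<lambda>N. \<Sum>k<N. c k * (E (Suc k) - E k)) \<longlonglongrightarrow> (\<Sum>\<^sub>\<infinity>k. c k * (E (Suc k) - E k))"
    using has_sum_imp_sums[OF has_sum_infsum[OF s1]] by (simp add: sums_def)
  have l2: "(\<lambda>N. \<Sum>k<N. a k * E (Suc k)) \<longlonglongrightarrow> (\<Sum>\<^sub>\<infinity>k. a k * E (Suc k))"
    using has_sum_imp_sums[OF has_sum_infsum[OF s2]] by (simp add: sums_def)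
  have l3: "(\<lambda>N. c N * E N) \<longlonglongrightarrow> 0"
  proof (rule Lim_null_comparison)
    show "\<forall>\<^sub>F N in sequentially. norm (c N * E N) \<le> c N * B"
      by (simp add: abs_mult c_nonneg mult_left_mono b)
    show "(\<lambda>N. c N * B) \<longlonglongrightarrow> 0" using tendsto_mult[OF c_lim tendsto_const[of B]] by simp
  qed
  have "(\<lambda>N. (\<Sum>k<N. a k * E (Suc k)) + c N * E N - c 0 * E 0) \<longlonglongrightarrow>
          (\<Sum>\<^sub>\<infinity>k. a k * E (Suc k)) + 0 - c 0 * E 0"
    by (intro tendsto_intros l2 l3)
  then have "(\<lambda>N. \<Sum>k<N. c k * (E (Suc k) - E k)) \<longlonglongrightarrow> (\<Sum>\<^sub>\<infinity>k. a k * E (Suc k)) - c 0 * E 0"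
    by (simp add: fin)
  then show ?thesis using l1 LIMSEQ_unique by blast
qed

end


context absch
begin

lemma W_diff_facts:
  assumes x: "1 \<le> x" and y: "1 \<le> y"
  shows "x \<le> y \<Longrightarrow> 0 \<le> W y - W x \<and> W y - W x \<le> L*(y-x)"
    and "y \<le> x \<Longrightarrow> L*(y-x) \<le> W y - W x \<and> W y - W x \<le> 0"
    and "\<bar>W y - W x\<bar> \<le> L'*\<bar>y-x\<bar>"
proof -
  show "x \<le> y \<Longrightarrow> 0 \<le> W y - W x \<and> W y - W x \<le> L*(y-x)"
    using W_mono[OF x] W_lip[OF x] by auto
  show "y \<le> x \<Longrightarrow> L*(y-x) \<le> W y - W x \<and> W y - W x \<le> 0"
    using W_mono[OF y] W_lip[OF y, of x] by (auto simp: algebra_simps)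
  show "\<bar>W y - W x\<bar> \<le> L'*\<bar>y-x\<bar>"
  proof (cases "x \<le> y")
    case True then show ?thesis using W_mono[OF x True] W_lip'[OF x True] by auto
  next
    case False then have "y \<le> x" by simp
    then show ?thesis using W_mono[OF y \<open>y \<le> x\<close>] W_lip'[OF y \<open>y \<le> x\<close>] by (auto simp: algebra_simps)
  qed
qed

lemma tv_le_from_bound:
  fixes f R :: "int \<Rightarrow> real"
  assumes "(R has_sum T) UNIV" "\<And>i. \<bar>f i\<bar> \<le> R i"
  shows "(\<lambda>i. \<bar>f i\<bar>) summable_on UNIV" "(\<Sum>\<^sub>\<infinity>i. \<bar>f i\<bar>) \<le> T"
proof -
  show s: "(\<lambda>i. \<bar>f i\<bar>) summable_on UNIV"
    by (rule summable_dom[OF has_sum_imp_summable[OF assms(1)]]) (simp add: assms(2))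
  have "(\<Sum>\<^sub>\<infinity>i. \<bar>f i\<bar>) \<le> infsum R UNIV"
    by (rule infsum_mono[OF s has_sum_imp_summable[OF assms(1)]]) (simp add: assms(2))
  then show "(\<Sum>\<^sub>\<infinity>i. \<bar>f i\<bar>) \<le> T" using infsumI[OF assms(1)] by simp
qed

lemma init_props:
  assumes lo: "\<And>j. m \<le> u j" and hi: "\<And>j. u j \<le> M"
    and Ds: "(\<lambda>j. \<bar>u (j+1) - u j\<bar>) summable_on UNIV"
  shows "m \<le> conv u i" "conv u i \<le> M"
    "(\<lambda>i. \<bar>conv u (i+1) - conv u i\<bar>) summable_on UNIV"
    "(\<Sum>\<^sub>\<infinity>i. \<bar>conv u (i+1) - conv u i\<bar>) \<le> (\<Sum>\<^sub>\<infinity>i. \<bar>u (i+1) - u i\<bar>)"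
proof -
  show "m \<le> conv u i" "conv u i \<le> M" using conv_bounds[OF lo hi] by auto
  define TV where "TV = (\<Sum>\<^sub>\<infinity>i. \<bar>u (i+1) - u i\<bar>)"
  have TVs: "((\<lambda>j. \<bar>u (j+1) - u j\<bar>) has_sum TV) UNIV" using Ds by (simp add: TV_def)
  have ub: "\<bar>u j\<bar> \<le> \<bar>m\<bar> + \<bar>M\<bar>" for j using lo[of j] hi[of j] by auto
  have Db: "\<bar>u (j+1) - u j\<bar> \<le> M - m" for j using lo[of j] hi[of j] lo[of "j+1"] hi[of "j+1"] by auto
  have R: "((\<lambda>i. \<Sum>\<^sub>\<infinity>k. c k * \<bar>u (i + 0 + int k + 1) - u (i + 0 + int k)\<bar>) has_sum 1 * TV) UNIV"
    by (rule convA[OF c_nonneg c_sum _ TVs]) simp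
  have bnd: "\<bar>conv u (i+1) - conv u i\<bar> \<le> (\<Sum>\<^sub>\<infinity>k. c k * \<bar>u (i + 0 + int k + 1) - u (i + 0 + int k)\<bar>)" for i
  proof -
    have "conv u (i+1) - conv u i = (\<Sum>\<^sub>\<infinity>k. c k * (u (i + int k + 1) - u (i + int k)))"
      by (rule conv_diff) (rule ub)
    also have "\<bar>\<dots>\<bar> \<le> (\<Sum>\<^sub>\<infinity>k. c k * \<bar>u (i + 0 + int k + 1) - u (i + 0 + int k)\<bar>)"
      by (rule infsum_abs_le) (auto intro!: c_summ_bdd Db simp: abs_mult c_nonneg)
    finally show ?thesis .
  qed
  show "(\<lambda>i. \<bar>conv u (i+1) - conv u i\<bar>) summable_on UNIV"
    using tv_le_from_bound(1)[OF R bnd] .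
  show "(\<Sum>\<^sub>\<infinity>i. \<bar>conv u (i+1) - conv u i\<bar>) \<le> (\<Sum>\<^sub>\<infinity>i. \<bar>u (i+1) - u i\<bar>)"
    using tv_le_from_bound(2)[OF R bnd] by (simp add: TV_def)
qed


lemma step_props:
  assumes lo: "\<And>j. m \<le> w j" and hi: "\<And>j. w j \<le> M"
    and Ds: "(\<lambda>j. \<bar>w (j+1) - w j\<bar>) summable_on UNIV"
  shows "m \<le> step w i" "step w i \<le> M"
    "(\<lambda>i. \<bar>step w (i+1) - step w i\<bar>) summable_on UNIV"
    "(\<Sum>\<^sub>\<infinity>i. \<bar>step w (i+1) - step w i\<bar>) \<le> (\<Sum>\<^sub>\<infinity>i. \<bar>w (i+1) - w i\<bar>)"
    "(\<lambda>i. \<bar>step w i - w i\<bar>) summable_on UNIV"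
    "(\<Sum>\<^sub>\<infinity>i. \<bar>step w i - w i\<bar>) \<le> lam * L' * (\<Sum>\<^sub>\<infinity>i. \<bar>w (i+1) - w i\<bar>)"
proof -
  define TV where "TV = (\<Sum>\<^sub>\<infinity>i. \<bar>w (i+1) - w i\<bar>)"
  define D where "D j = w (j+1) - w j" for j
  define G where "G j = W (w j)" for j
  define dG where "dG j = G (j+1) - G j" for j
  define BG where "BG = \<bar>W m\<bar> + \<bar>W M\<bar>"
  have TVs: "((\<lambda>j. \<bar>D j\<bar>) has_sum TV) UNIV" using Ds by (simp add: TV_def D_def)
  have w1: "1 \<le> w j" for j using lo[of j] m_ge by simp
  have mM: "m \<le> M" using lo[of 0] hi[of 0] by simp
  have Gb: "\<bar>G j\<bar> \<le> BG" for j
    using W_mono[OF m_ge lo[of j]] W_mono[OF w1 hi[of j]] by (auto simp: G_def BG_def)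
  have dGb: "\<bar>dG j\<bar> \<le> 2*BG" for j using Gb[of j] Gb[of "j+1"] by (auto simp: dG_def)
  have Db: "\<bar>D j\<bar> \<le> M - m" for j using lo[of j] hi[of j] lo[of "j+1"] hi[of "j+1"] by (auto simp: D_def)
  have dG_lip: "\<bar>dG j\<bar> \<le> L' * \<bar>D j\<bar>" for j
    using W_diff_facts(3)[OF w1 w1] by (simp add: dG_def G_def D_def)
  have dG_pos: "0 \<le> D j \<Longrightarrow> 0 \<le> dG j \<and> dG j \<le> L * D j" for j
    using W_diff_facts(1)[OF w1 w1, of j "j+1"] by (simp add: dG_def G_def D_def)
  have dG_neg: "D j \<le> 0 \<Longrightarrow> L * D j \<le> dG j \<and> dG j \<le> 0" for j
    using W_diff_facts(2)[OF w1[of j] w1[of "j+1"]] unfolding dG_def G_def D_def by linarith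
  have step_eq: "step w i = w i + lam * conv dG i" for i
  proof -
    have "conv G (i+1) - conv G i = (\<Sum>\<^sub>\<infinity>k. c k * (G (i + int k + 1) - G (i + int k)))"
      by (rule conv_diff) (rule Gb)
    also have "\<dots> = conv dG i" by (simp add: conv_def dG_def)
    finally show ?thesis by (simp add: step_def G_def[abs_def])
  qed
  have Suc_eq: "\<And>i k. i + int (Suc k) = i + int k + 1" by simp
  have lc: "0 \<le> lam * c 0 * L" "lam * c 0 * L \<le> 1"
  proof -
    show "0 \<le> lam * c 0 * L" using lam_nonneg c0_nonneg L_nonneg by simp
    have "lam * c 0 * L = c 0 * (lam * L)" by simp
    also have "\<dots> \<le> 1 * 1" using c0_nonneg c0_le1 CFL lam_nonneg L_nonneg
      by (intro mult_mono) auto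
    finally show "lam * c 0 * L \<le> 1" by simp
  qed
  have convdG_eq: "conv dG i = (\<Sum>\<^sub>\<infinity>k. a k * G (i + int k + 1)) - c 0 * G i" for i
  proof -
    have "conv dG i = (\<Sum>\<^sub>\<infinity>k. c k * (G (i + int (Suc k)) - G (i + int k)))"
      unfolding conv_def dG_def Suc_eq by (simp add: add.assoc)
    also have "\<dots> = (\<Sum>\<^sub>\<infinity>k. a k * G (i + int (Suc k))) - c 0 * G (i + int 0)"
      by (rule abel) (rule Gb)
    finally show ?thesis unfolding Suc_eq by simp
  qed
  have aG_summ: "(\<lambda>k. a k * G (i + int k + 1)) summable_on UNIV" for i
    by (rule a_summ_bdd) (rule Gb)
  show "step w i \<le> M"
  proof -
    have ub: "G j \<le> G i + L * (M - w i)" for j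
    proof (cases "w i \<le> w j")
      case True
      then have "G j - G i \<le> L * (w j - w i)" using W_lip[OF w1 True] by (simp add: G_def)
      also have "\<dots> \<le> L * (M - w i)" using L_nonneg hi[of j] by (intro mult_left_mono) auto
      finally show ?thesis by simp
    next
      case False
      then have "G j \<le> G i" using W_mono[OF w1, of j "w i"] by (simp add: G_def)
      moreover have "0 \<le> L * (M - w i)" using L_nonneg hi[of i] by simp
      ultimately show ?thesis by simp
    qed
    have "(\<Sum>\<^sub>\<infinity>k. a k * G (i + int k + 1)) \<le> (\<Sum>\<^sub>\<infinity>k. a k * (G i + L * (M - w i)))"
      by (rule infsum_mono[OF aG_summ has_sum_imp_summable[OF asum_const]])
         (simp add: a_nonneg ub mult_left_mono)
    also have "\<dots> = c 0 * (G i + L * (M - w i))" by (rule infsumI[OF asum_const])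
    finally have "conv dG i \<le> c 0 * L * (M - w i)" using convdG_eq[of i] by (simp add: algebra_simps)
    then have "lam * conv dG i \<le> lam * (c 0 * L * (M - w i))" using lam_nonneg by (rule mult_left_mono)
    also have "\<dots> = (lam * c 0 * L) * (M - w i)" by simp
    also have "\<dots> \<le> M - w i" using lc hi[of i] by (simp add: mult_left_le_one_le)
    finally show ?thesis using step_eq[of i] by simp
  qed
  show "m \<le> step w i"
  proof -
    have lb: "G i - L * (w i - m) \<le> G j" for j
    proof (cases "w j \<le> w i")
      case True
      then have "G i - G j \<le> L * (w i - w j)" using W_lip[OF w1 True] by (simp add: G_def)
      also have "\<dots> \<le> L * (w i - m)" using L_nonneg lo[of j] by (intro mult_left_mono) auto
      finally show ?thesis by simp
    next
      case False
      then have "G i \<le> G j" using W_mono[OF w1, of i "w j"] by (simp add: G_def)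
      moreover have "0 \<le> L * (w i - m)" using L_nonneg lo[of i] by simp
      ultimately show ?thesis by simp
    qed
    have "(\<Sum>\<^sub>\<infinity>k. a k * (G i - L * (w i - m))) \<le> (\<Sum>\<^sub>\<infinity>k. a k * G (i + int k + 1))"
      by (rule infsum_mono[OF has_sum_imp_summable[OF asum_const] aG_summ])
         (simp add: a_nonneg lb mult_left_mono)
    moreover have "(\<Sum>\<^sub>\<infinity>k. a k * (G i - L * (w i - m))) = c 0 * (G i - L * (w i - m))"
      by (rule infsumI[OF asum_const])
    ultimately have "- (c 0 * L * (w i - m)) \<le> conv dG i" using convdG_eq[of i] by (simp add: algebra_simps)
    then have "lam * (- (c 0 * L * (w i - m))) \<le> lam * conv dG i" using lam_nonneg by (rule mult_left_mono)
    moreover have "(lam * c 0 * L) * (w i - m) \<le> w i - m" using lc lo[of i] by (simp add: mult_left_le_one_le)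
    ultimately show ?thesis using step_eq[of i] by (simp add: algebra_simps)
  qed
  have dGs: "((\<lambda>j. \<bar>dG j\<bar>) has_sum (\<Sum>\<^sub>\<infinity>j. \<bar>dG j\<bar>)) UNIV"
  proof -
    have "((\<lambda>j. L' * \<bar>D j\<bar>) has_sum L' * TV) UNIV" by (rule has_sum_cmult_right[OF TVs])
    then have "(\<lambda>j. \<bar>dG j\<bar>) summable_on UNIV"
      by (intro summable_dom[OF has_sum_imp_summable]) (auto simp: dG_lip)
    then show ?thesis by (simp add: has_sum_infsum)
  qed
  define TG where "TG = (\<Sum>\<^sub>\<infinity>j. \<bar>dG j\<bar>)"
  define Z where "Z i = (\<Sum>\<^sub>\<infinity>k. a k * \<bar>dG (i + 1 + int k)\<bar>)" for i
  have Zs: "(Z has_sum c 0 * TG) UNIV"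
    unfolding Z_def TG_def by (rule convA[OF a_nonneg a_sum _ dGs]) simp
  define R where "R i = (\<bar>D i\<bar> - lam * c 0 * \<bar>dG i\<bar>) + lam * Z i" for i
  have Rs: "(R has_sum TV) UNIV"
  proof -
    have "((\<lambda>i. lam * c 0 * \<bar>dG i\<bar>) has_sum lam * c 0 * TG) UNIV"
      using has_sum_cmult_right[OF dGs, of "lam * c 0"] by (simp add: TG_def)
    from has_sum_diff'[OF TVs this]
    have "((\<lambda>i. \<bar>D i\<bar> - lam * c 0 * \<bar>dG i\<bar>) has_sum TV - lam * c 0 * TG) UNIV" .
    from has_sum_add[OF this has_sum_cmult_right[OF Zs, of lam]]
    show ?thesis unfolding R_def[abs_def] by (simp add: algebra_simps)
  qed
  have Dbound: "\<bar>step w (i+1) - step w i\<bar> \<le> R i" for i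
  proof -
    have "conv dG (i+1) - conv dG i = (\<Sum>\<^sub>\<infinity>k. c k * (dG (i + int k + 1) - dG (i + int k)))"
      by (rule conv_diff) (rule dGb)
    also have "\<dots> = (\<Sum>\<^sub>\<infinity>k. c k * (dG (i + int (Suc k)) - dG (i + int k)))"
      unfolding Suc_eq ..
    also have "\<dots> = (\<Sum>\<^sub>\<infinity>k. a k * dG (i + int (Suc k))) - c 0 * dG (i + int 0)"
      by (rule abel) (rule dGb)
    also have "\<dots> = (\<Sum>\<^sub>\<infinity>k. a k * dG (i + 1 + int k)) - c 0 * dG i"
      by (simp add: algebra_simps)
    finally have e: "conv dG (i+1) - conv dG i = (\<Sum>\<^sub>\<infinity>k. a k * dG (i + 1 + int k)) - c 0 * dG i" .
    define Y where "Y = (\<Sum>\<^sub>\<infinity>k. a k * dG (i + 1 + int k))"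
    from e have "lam * (conv dG (i+1) - conv dG i) = lam * (Y - c 0 * dG i)" by (simp add: Y_def)
    then have e2: "lam * conv dG (i+1) - lam * conv dG i = lam * Y - lam * c 0 * dG i"
      by (simp add: right_diff_distrib mult.assoc)
    have "step w (i+1) - step w i = (D i - lam * c 0 * dG i) + lam * Y"
      using step_eq[of i] step_eq[of "i+1"] e2 unfolding D_def by linarith
    then have "\<bar>step w (i+1) - step w i\<bar> \<le> \<bar>D i - (lam * c 0) * dG i\<bar> + lam * \<bar>Y\<bar>"
      using lam_nonneg by (simp add: abs_mult) (metis abs_triangle_ineq abs_mult abs_of_nonneg)
    also have "\<bar>D i - (lam * c 0) * dG i\<bar> = \<bar>D i\<bar> - (lam * c 0) * \<bar>dG i\<bar>"
    proof (rule key_abs)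
      show "0 \<le> lam * c 0" using lam_nonneg c0_nonneg by simp
      show "lam * c 0 * L \<le> 1" by (rule lc(2))
      show "0 \<le> L" by (rule L_nonneg)
    qed (use dG_pos dG_neg in auto)
    also have "\<bar>Y\<bar> \<le> Z i" unfolding Y_def Z_def
      by (rule infsum_abs_le) (auto intro!: a_summ_bdd dGb simp: abs_mult a_nonneg)
    then have "lam * \<bar>Y\<bar> \<le> lam * Z i" using lam_nonneg by (rule mult_left_mono)
    finally show ?thesis by (simp add: R_def)
  qed
  show "(\<lambda>i. \<bar>step w (i+1) - step w i\<bar>) summable_on UNIV"
    using tv_le_from_bound(1)[OF Rs Dbound] .
  show "(\<Sum>\<^sub>\<infinity>i. \<bar>step w (i+1) - step w i\<bar>) \<le> (\<Sum>\<^sub>\<infinity>i. \<bar>w (i+1) - w i\<bar>)"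
    using tv_le_from_bound(2)[OF Rs Dbound] by (simp add: TV_def)
  have R2s: "((\<lambda>i. lam * (\<Sum>\<^sub>\<infinity>k. c k * (L' * \<bar>D (i + 0 + int k)\<bar>))) has_sum lam * (1 * (L' * TV))) UNIV"
    by (rule has_sum_cmult_right, rule convA[OF c_nonneg c_sum _ has_sum_cmult_right[OF TVs]])
       (simp add: L'_nonneg)
  have tbound: "\<bar>step w i - w i\<bar> \<le> lam * (\<Sum>\<^sub>\<infinity>k. c k * (L' * \<bar>D (i + 0 + int k)\<bar>))" for i
  proof -
    have "\<bar>conv dG i\<bar> \<le> (\<Sum>\<^sub>\<infinity>k. c k * (L' * \<bar>D (i + 0 + int k)\<bar>))"
      unfolding conv_def
    proof (rule infsum_abs_le)
      show "(\<lambda>k. c k * (L' * \<bar>D (i + 0 + int k)\<bar>)) summable_on UNIV"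
        by (rule c_summ_bdd[where B="L' * (M - m)"])
           (use Db L'_nonneg in \<open>auto simp: abs_mult intro: mult_left_mono\<close>)
      show "\<bar>c k * dG (i + int k)\<bar> \<le> c k * (L' * \<bar>D (i + 0 + int k)\<bar>)" for k
        using dG_lip[of "i + int k"] by (simp add: abs_mult c_nonneg mult_left_mono)
    qed
    then show ?thesis using step_eq[of i] lam_nonneg by (simp add: abs_mult mult_left_mono)
  qed
  show "(\<lambda>i. \<bar>step w i - w i\<bar>) summable_on UNIV"
    using tv_le_from_bound(1)[OF R2s tbound] .
  show "(\<Sum>\<^sub>\<infinity>i. \<bar>step w i - w i\<bar>) \<le> lam * L' * (\<Sum>\<^sub>\<infinity>i. \<bar>w (i+1) - w i\<bar>)"
    using tv_le_from_bound(2)[OF R2s tbound] by (simp add: TV_def)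
qed

end



context kern begin
lemma coef_sum: "(\<Sum>\<^sub>\<infinity>j\<in>{i..}. Phi_coef Phi \<alpha> dz i j * f j) = (\<Sum>\<^sub>\<infinity>k. c k * f (i + int k))"
proof (rule infsum_reindex_bij_witness[where j="\<lambda>j. nat (j - i)" and i="\<lambda>k. i + int k"])
  fix a assume "a \<in> {i..}"
  then have e: "i + int (nat (a - i)) = a" by simp
  show "c (nat (a - i)) * f (i + int (nat (a - i))) = Phi_coef Phi \<alpha> dz i a * f a"
    using coef_eq[of i "nat (a - i)"] unfolding e by simp
qed auto
end

lemma Wfacts:
  fixes V V' :: "real \<Rightarrow> real"
  assumes V_deriv: "\<forall>x\<ge>0. (V has_real_derivative V' x) (at x within {0..})"
    and V'_cont: "continuous_on {0..} V'"
    and V_noninc: "\<forall>x y. 0 \<le> x \<longrightarrow> x \<le> y \<longrightarrow> V y \<le> V x"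
  shows "bdd_above ((\<lambda>w. deriv (Wf V) w) ` {1..})"
    and "bdd_above ((\<lambda>w. \<bar>deriv (Wf V) w\<bar>) ` {1..})"
    and "\<And>a b. 1 \<le> a \<Longrightarrow> a \<le> b \<Longrightarrow> Wf V a \<le> Wf V b"
    and "\<And>a b. 1 \<le> a \<Longrightarrow> a \<le> b \<Longrightarrow> Wf V b - Wf V a \<le> Sup ((\<lambda>w. deriv (Wf V) w) ` {1..}) * (b - a)"
    and "\<And>a b. 1 \<le> a \<Longrightarrow> a \<le> b \<Longrightarrow> Wf V b - Wf V a \<le> Sup ((\<lambda>w. \<bar>deriv (Wf V) w\<bar>) ` {1..}) * (b - a)"
    and "0 \<le> Sup ((\<lambda>w. \<bar>deriv (Wf V) w\<bar>) ` {1..})"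
proof -
  have Vd: "(V has_real_derivative V' x) (at x)" if x: "0 < x" for x
  proof -
    have "(V has_real_derivative V' x) (at x within {0<..})"
      by (rule has_field_derivative_subset[of _ _ _ "{0..}"]) (use V_deriv x in auto)
    then show ?thesis using at_within_open[of x "{0<..}"] x by simp
  qed
  have Wd: "(Wf V has_real_derivative V' (inverse w) * (- (inverse w ^ Suc (Suc 0)))) (at w)"
    if w: "0 < w" for w
  proof -
    have "((\<lambda>w. V (inverse w)) has_real_derivative V' (inverse w) * (- (inverse w ^ Suc (Suc 0)))) (at w)"
      by (rule DERIV_chain'[OF DERIV_inverse Vd]) (use w in auto)
    then show ?thesis unfolding Wf_def by (simp add: inverse_eq_divide)
  qed
  have "compact (V' ` {0..1})"
    by (rule compact_continuous_image) (auto intro: continuous_on_subset[OF V'_cont])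
  then obtain B where B: "\<And>x. x \<in> {0..1} \<Longrightarrow> \<bar>V' x\<bar> \<le> B"
    using compact_imp_bounded bounded_iff by (metis image_eqI real_norm_def)
  have B0: "0 \<le> B" using B[of 0] by simp
  have dB: "\<bar>deriv (Wf V) w\<bar> \<le> B" if w: "1 \<le> w" for w
  proof -
    have e: "deriv (Wf V) w = V' (inverse w) * (- (inverse w ^ Suc (Suc 0)))"
      using Wd[of w] w by (intro DERIV_imp_deriv) auto
    have h1: "\<bar>V' (inverse w)\<bar> \<le> B" using w by (intro B) (auto simp: inverse_le_1_iff)
    have h2: "inverse w ^ Suc (Suc 0) \<le> 1" using w
      by (intro power_le_one) (auto simp: inverse_le_1_iff)
    have h3: "0 \<le> inverse w ^ Suc (Suc 0)" using w by simp
    have "\<bar>deriv (Wf V) w\<bar> = \<bar>V' (inverse w)\<bar> * inverse w ^ Suc (Suc 0)"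
      unfolding e abs_mult abs_minus_cancel using h3 by simp
    also have "\<dots> \<le> B * 1" by (rule mult_mono[OF h1 h2 B0]) simp
    finally show ?thesis by simp
  qed
  show bd1: "bdd_above ((\<lambda>w. deriv (Wf V) w) ` {1..})"
    by (rule bdd_aboveI2[of _ _ B]) (use dB in \<open>auto simp: abs_le_iff\<close>)
  show bd2: "bdd_above ((\<lambda>w. \<bar>deriv (Wf V) w\<bar>) ` {1..})"
    by (rule bdd_aboveI2[of _ _ B]) (use dB in auto)
  show mono: "Wf V a \<le> Wf V b" if "1 \<le> a" "a \<le> b" for a b
  proof -
    have "1/b \<le> 1/a" using that by (intro divide_left_mono) auto
    moreover have "0 \<le> 1/b" using that by simp
    ultimately show ?thesis using V_noninc unfolding Wf_def by blast
  qed
  have lip: "Wf V b - Wf V a \<le> K * (b - a)"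
    if ab: "1 \<le> a" "a \<le> b" and K: "\<And>z. 1 \<le> z \<Longrightarrow> deriv (Wf V) z \<le> K" for a b K
  proof (cases "a = b")
    case True then show ?thesis by simp
  next
    case False
    then have lt: "a < b" using ab by simp
    have cont: "continuous_on {a..b} (Wf V)"
      using Wd ab by (intro continuous_at_imp_continuous_on ballI DERIV_isCont) (auto intro: Wd)
    have dif: "Wf V differentiable (at x)" if "a < x" "x < b" for x
      using Wd[of x] that ab unfolding real_differentiable_def by auto
    obtain l z where z: "a < z" "z < b" "DERIV (Wf V) z :> l" "Wf V b - Wf V a = (b - a) * l"
      using MVT[OF lt cont dif] by blast
    have "l = deriv (Wf V) z" using z(3) by (simp add: DERIV_imp_deriv)
    then have "l \<le> K" using K[of z] z ab by simp
    then have "(b - a) * l \<le> (b - a) * K" using ab by (intro mult_left_mono) auto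
    then show ?thesis using z(4) by (simp add: mult.commute)
  qed
  show "Wf V b - Wf V a \<le> Sup ((\<lambda>w. deriv (Wf V) w) ` {1..}) * (b - a)" if "1 \<le> a" "a \<le> b" for a b
    by (rule lip[OF that]) (rule cSup_upper[OF _ bd1], simp)
  show "Wf V b - Wf V a \<le> Sup ((\<lambda>w. \<bar>deriv (Wf V) w\<bar>) ` {1..}) * (b - a)" if "1 \<le> a" "a \<le> b" for a b
  proof (rule lip[OF that])
    fix z :: real assume "1 \<le> z"
    then have "\<bar>deriv (Wf V) z\<bar> \<le> Sup ((\<lambda>w. \<bar>deriv (Wf V) w\<bar>) ` {1..})"
      by (intro cSup_upper[OF _ bd2]) simp
    then show "deriv (Wf V) z \<le> Sup ((\<lambda>w. \<bar>deriv (Wf V) w\<bar>) ` {1..})" by simp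
  qed
  have "\<bar>deriv (Wf V) 1\<bar> \<le> Sup ((\<lambda>w. \<bar>deriv (Wf V) w\<bar>) ` {1..})"
    by (intro cSup_upper[OF _ bd2]) simp
  then show "0 \<le> Sup ((\<lambda>w. \<bar>deriv (Wf V) w\<bar>) ` {1..})" by linarith
qed


theorem corollary2p3:
  fixes Phi V V' :: "real \<Rightarrow> real" and \<alpha> dz dt :: real and y0 :: "int \<Rightarrow> real"
  assumes Phi_nonneg: "\<forall>z\<ge>0. Phi z \<ge> 0"
    and Phi_noninc: "\<forall>x y. 0 \<le> x \<longrightarrow> x \<le> y \<longrightarrow> Phi y \<le> Phi x"
    and Phi_int: "(Phi has_integral 1) {0..}"
    and Phi_moment: "(\<lambda>z. z * Phi z) integrable_on {0..}"
    and alpha_pos: "\<alpha> > 0"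
    and V_deriv: "\<forall>x\<ge>0. (V has_real_derivative V' x) (at x within {0..})"
    and V'_cont: "continuous_on {0..} V'"
    and V_noninc: "\<forall>x y. 0 \<le> x \<longrightarrow> x \<le> y \<longrightarrow> V y \<le> V x"
    and dz_pos: "dz > 0" and dt_pos: "dt > 0"
    and CFL: "0 \<le> (dt / dz) * Sup ((\<lambda>w. deriv (Wf V) w) ` {1..})"
             "(dt / dz) * Sup ((\<lambda>w. deriv (Wf V) w) ` {1..}) \<le> 1"
    and y0_bdd: "bdd_above (range y0)"
    and y0_ge1: "\<forall>i. y0 i \<ge> 1"
    and y0_BV: "(\<lambda>i. \<bar>y0 (i + 1) - y0 i\<bar>) summable_on UNIV"
  shows "\<forall>n i.
     1 \<le> Inf (range y0)
     \<and> Inf (range y0) \<le> scheme Phi \<alpha> dz dt V y0 n i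
     \<and> scheme Phi \<alpha> dz dt V y0 n i \<le> Sup (range y0)
     \<and> (\<lambda>k. \<bar>scheme Phi \<alpha> dz dt V y0 n (k + 1) - scheme Phi \<alpha> dz dt V y0 n k\<bar>) summable_on UNIV
     \<and> (\<Sum>\<^sub>\<infinity> k. \<bar>scheme Phi \<alpha> dz dt V y0 n (k + 1) - scheme Phi \<alpha> dz dt V y0 n k\<bar>)
         \<le> (\<Sum>\<^sub>\<infinity> k. \<bar>y0 (k + 1) - y0 k\<bar>)
     \<and> (\<lambda>k. \<bar>scheme Phi \<alpha> dz dt V y0 (Suc n) k - scheme Phi \<alpha> dz dt V y0 n k\<bar>) summable_on UNIV
     \<and> dz * (\<Sum>\<^sub>\<infinity> k. \<bar>scheme Phi \<alpha> dz dt V y0 (Suc n) k - scheme Phi \<alpha> dz dt V y0 n k\<bar>)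
         \<le> dt * Sup ((\<lambda>w. \<bar>deriv (Wf V) w\<bar>) ` {1..}) * (\<Sum>\<^sub>\<infinity> k. \<bar>y0 (k + 1) - y0 k\<bar>)"
proof -
  interpret K: kern Phi \<alpha> dz
    using Phi_nonneg Phi_noninc Phi_int alpha_pos dz_pos by unfold_locales auto
  note WF = Wfacts[OF V_deriv V'_cont V_noninc]
  have lampos: "0 < dt / dz" using dt_pos dz_pos by simp
  have L0: "0 \<le> Sup ((\<lambda>w. deriv (Wf V) w) ` {1..})"
  proof (rule ccontr)
    assume "\<not> ?thesis"
    then have "dt / dz * Sup ((\<lambda>w. deriv (Wf V) w) ` {1..}) < 0"
      by (intro mult_pos_neg[OF lampos]) simp
    then show False using CFL(1) by simp
  qed
  have bb: "bdd_below (range y0)" using y0_ge1 by (intro bdd_belowI2[of _ 1]) auto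
  have m1: "1 \<le> Inf (range y0)" using y0_ge1 by (intro cInf_greatest) auto
  have y0lo: "Inf (range y0) \<le> y0 j" for j by (rule cInf_lower[OF _ bb]) simp
  have y0hi: "y0 j \<le> Sup (range y0)" for j by (rule cSup_upper[OF _ y0_bdd]) simp
  interpret A: absch "ck Phi \<alpha> dz" "Wf V" "dt / dz" "Sup ((\<lambda>w. deriv (Wf V) w) ` {1..})"
      "Sup ((\<lambda>w. \<bar>deriv (Wf V) w\<bar>) ` {1..})" "Inf (range y0)" "Sup (range y0)"
  proof unfold_locales
    show "0 \<le> ck Phi \<alpha> dz k" for k by (rule K.c_nonneg)
    show "ck Phi \<alpha> dz (Suc k) \<le> ck Phi \<alpha> dz k" for k by (rule K.c_mono)
    show "(ck Phi \<alpha> dz has_sum 1) UNIV" by (rule K.c_has_sum)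
  qed (use WF L0 lampos CFL m1 in auto)
  let ?s = "scheme Phi \<alpha> dz dt V y0"
  define TV0 where "TV0 = (\<Sum>\<^sub>\<infinity> k. \<bar>y0 (k + 1) - y0 k\<bar>)"
  define L' where "L' = Sup ((\<lambda>w. \<bar>deriv (Wf V) w\<bar>) ` {1..})"
  have L'0: "0 \<le> L'" using WF(6) by (simp add: L'_def)
  have s0: "?s 0 = A.conv y0"
    by (rule ext) (simp add: K.coef_sum A.conv_def)
  have sS: "?s (Suc n) = A.step (?s n)" for n
    by (rule ext) (simp add: K.coef_sum A.conv_def A.step_def Wbar_def)
  have inv: "(\<forall>i. Inf (range y0) \<le> ?s n i \<and> ?s n i \<le> Sup (range y0))
      \<and> (\<lambda>k. \<bar>?s n (k + 1) - ?s n k\<bar>) summable_on UNIV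
      \<and> (\<Sum>\<^sub>\<infinity> k. \<bar>?s n (k + 1) - ?s n k\<bar>) \<le> TV0" for n
  proof (induction n)
    case 0
    show ?case unfolding s0 TV0_def
      using A.init_props[OF y0lo y0hi y0_BV] by auto
  next
    case (Suc n)
    then have lo: "\<And>j. Inf (range y0) \<le> ?s n j" and hi: "\<And>j. ?s n j \<le> Sup (range y0)"
      and Ds: "(\<lambda>k. \<bar>?s n (k + 1) - ?s n k\<bar>) summable_on UNIV"
      and T: "(\<Sum>\<^sub>\<infinity> k. \<bar>?s n (k + 1) - ?s n k\<bar>) \<le> TV0" by auto
    note P = A.step_props[OF lo hi Ds]
    show ?case unfolding sS using P(1,2,3) P(4) T by auto
  qed
  show ?thesis
  proof (intro allI)
    fix n i
    from inv[of n] have lo: "\<And>j. Inf (range y0) \<le> ?s n j" and hi: "\<And>j. ?s n j \<le> Sup (range y0)"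
      and Ds: "(\<lambda>k. \<bar>?s n (k + 1) - ?s n k\<bar>) summable_on UNIV"
      and T: "(\<Sum>\<^sub>\<infinity> k. \<bar>?s n (k + 1) - ?s n k\<bar>) \<le> TV0" by auto
    note P = A.step_props[OF lo hi Ds]
    have ts: "(\<lambda>k. \<bar>?s (Suc n) k - ?s n k\<bar>) summable_on UNIV" unfolding sS by (rule P(5))
    have "dz * (\<Sum>\<^sub>\<infinity> k. \<bar>?s (Suc n) k - ?s n k\<bar>) \<le> dz * (dt / dz * L' * (\<Sum>\<^sub>\<infinity> k. \<bar>?s n (k + 1) - ?s n k\<bar>))"
      unfolding sS L'_def using P(6) dz_pos by (intro mult_left_mono) auto
    also have "\<dots> = dt * L' * (\<Sum>\<^sub>\<infinity> k. \<bar>?s n (k + 1) - ?s n k\<bar>)" using dz_pos by simp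
    also have "\<dots> \<le> dt * L' * TV0" using T dt_pos L'0 by (intro mult_left_mono) auto
    finally have te: "dz * (\<Sum>\<^sub>\<infinity> k. \<bar>?s (Suc n) k - ?s n k\<bar>) \<le> dt * L' * TV0" .
    show "1 \<le> Inf (range y0)
     \<and> Inf (range y0) \<le> ?s n i \<and> ?s n i \<le> Sup (range y0)
     \<and> (\<lambda>k. \<bar>?s n (k + 1) - ?s n k\<bar>) summable_on UNIV
     \<and> (\<Sum>\<^sub>\<infinity> k. \<bar>?s n (k + 1) - ?s n k\<bar>) \<le> (\<Sum>\<^sub>\<infinity> k. \<bar>y0 (k + 1) - y0 k\<bar>)
     \<and> (\<lambda>k. \<bar>?s (Suc n) k - ?s n k\<bar>) summable_on UNIV
     \<and> dz * (\<Sum>\<^sub>\<infinity> k. \<bar>?s (Suc n) k - ?s n k\<bar>)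
         \<le> dt * Sup ((\<lambda>w. \<bar>deriv (Wf V) w\<bar>) ` {1..}) * (\<Sum>\<^sub>\<infinity> k. \<bar>y0 (k + 1) - y0 k\<bar>)"
      using m1 lo hi Ds T ts te by (simp add: TV0_def L'_def)
  qed
qed

end
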